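(* In the setting below with $P=\mathfrak S$ and the absolute error criterion: (i) if $\{S_d\}$ is polynomially tractable and $\lambda_1\ge1$, then $b_d\in O(\ln d)$; (ii) if $\{S_d\}$ is strongly polynomially tractable and $\lambda_1\ge1$, then $b_d\in O(1)$ and $\lambda_2<1/\lambda_1$.
   Context: Setting: $S_1:H_1\to G_1$ is a compact linear operator between real Hilbert spaces ($H_1$ infinite-dimensional separable); $\lambda=(\lambda_m)_{m\in\mathbb N}$, $\lambda_1\ge\lambda_2\ge\dots\ge0$, are the eigenvalues of $S_1^\dagger S_1$. $S_d=S_1^{\otimes d}:H_1^{\otimes d}\to G_1^{\otimes d}$. For each $d$ fix $\emptyset\ne I_d=\{i_1<\dots<i_{a_d}\}\subset\{1,\dots,d\}$ ($I_1=\{1\}$), put $a_d=\#I_d$, $b_d=d-a_d$, and fix one type $P\in\{\mathfrak S,\mathfrak A\}$ for all $d$; the problem $\{S_d\}$ is the family of restrictions of $S_d$ to the $I_d$-symmetric subspace (if $P=\mathfrak S$) or $I_d$-antisymmetric subspace (if $P=\mathfrak A$) of $H_1^{\otimes d}$, i.e. the range of $\frac1{a_d!}\sum_{\pi}(\pm1)U_\pi$, the sum over permutations $\pi$ of $\{1,\dots,d\}$ fixing all points outside $I_d$, $U_\pi(f_1\otimes\cdots\otimes f_d)=f_{\pi(1)}\otimes\cdots\otimes f_{\pi(d)}$, sign $(-1)^{|\pi|}$ used for $\mathfrak A$. Let $\nabla_d=\{k\in\mathbb N^d:k_{i_1}\le\dots\le k_{i_{a_d}}\}$ for $P=\mathfrak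 S$ and with strict inequalities for $P=\mathfrak A$; $\lambda_{d,k}=\prod_{l=1}^d\lambda_{k_l}$; $\psi:\mathbb N\to\nabla_d$ a bijection with $\lambda_{d,\psi(1)}\ge\lambda_{d,\psi(2)}\ge\cdots$. These are exactly the eigenvalues of $S_d^\dagger S_d$ on the subspace, and the information complexity (absolute error) is $n(\epsilon,d)=\#\{k\in\nabla_d:\lambda_{d,k}>\epsilon^2\}$, the initial error $\epsilon^{\rm init}_d=\sqrt{\lambda_{d,\psi(1)}}$ (equal to $\lambda_1^{d/2}$ if $P=\mathfrak S$, and $\sqrt{\lambda_1^{b_d}\lambda_1\lambda_2\cdots\lambda_{a_d}}$ if $P=\mathfrak A$). Polynomially tractable: $\exists C,p>0,q\ge0$ with $n(\epsilon,d)\le C\epsilon^{-p}d^q$ for all $d\in\mathbb N,\epsilon\in(0,1]$; strongly polynomially tractable: this with $q=0$. Standing assumptions: $\lambda_2>0$ and $\epsilon_d^{\rm init}>0$ for all $d$. $\ell_\tau$: sequences with $\|\lambda\|_{\ell_\tau}^\tau=\sum_m\lambda_m^\tau<\infty$. *)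

theory Defs
  imports "HOL-Analysis.Analysis" "HOL-Library.Landau_Symbols"
begin

text \<open>Eigenvalue sequence of S_1^dagger S_1, indexed from 1 (value at 0 is irrelevant).\<close>
definition eigen_seq :: "(nat \<Rightarrow> real) \<Rightarrow> bool" where
  "eigen_seq lam \<longleftrightarrow>
     (\<forall>m\<ge>1. 0 \<le> lam m) \<and> (\<forall>m\<ge>1. lam (Suc m) \<le> lam m) \<and>
     (lam \<longlonglongrightarrow> 0)"

definition index_family :: "(nat \<Rightarrow> nat set) \<Rightarrow> bool" where
  "index_family I \<longleftrightarrow> (\<forall>d\<ge>1. I d \<noteq> {} \<and> I d \<subseteq> {1..d}) \<and> I 1 = {1}"

definition bdim :: "(nat \<Rightarrow> nat set) \<Rightarrow> nat \<Rightarrow> nat" where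
  "bdim I d = d - card (I d)"

definition nabla_sym :: "(nat \<Rightarrow> nat set) \<Rightarrow> nat \<Rightarrow> (nat \<Rightarrow> nat) set" where
  "nabla_sym I d = {k \<in> {1..d} \<rightarrow>\<^sub>E {1..}. \<forall>i\<in>I d. \<forall>j\<in>I d. i \<le> j \<longrightarrow> k i \<le> k j}"

definition lam_d :: "(nat \<Rightarrow> real) \<Rightarrow> nat \<Rightarrow> (nat \<Rightarrow> nat) \<Rightarrow> real" where
  "lam_d lam d k = (\<Prod>l\<in>{1..d}. lam (k l))"

text \<open>Information complexity, absolute error criterion.\<close>
definition info_compl_sym :: "(nat \<Rightarrow> real) \<Rightarrow> (nat \<Rightarrow> nat set) \<Rightarrow> real \<Rightarrow> nat \<Rightarrow> nat" where
  "info_compl_sym lam I \<epsilon> d = card {k \<in> nabla_sym I d. lam_d lam d k > \<epsilon>\<^sup>2}"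

definition poly_tractable :: "(real \<Rightarrow> nat \<Rightarrow> nat) \<Rightarrow> bool" where
  "poly_tractable n \<longleftrightarrow> (\<exists>C p q. C > 0 \<and> p > 0 \<and> q \<ge> 0 \<and>
     (\<forall>d\<ge>1. \<forall>\<epsilon>. 0 < \<epsilon> \<and> \<epsilon> \<le> 1 \<longrightarrow> real (n \<epsilon> d) \<le> C * \<epsilon> powr (-p) * real d powr q))"

definition strongly_poly_tractable :: "(real \<Rightarrow> nat \<Rightarrow> nat) \<Rightarrow> bool" where
  "strongly_poly_tractable n \<longleftrightarrow> (\<exists>C p. C > 0 \<and> p > 0 \<and>
     (\<forall>d\<ge>1. \<forall>\<epsilon>. 0 < \<epsilon> \<and> \<epsilon> \<le> 1 \<longrightarrow> real (n \<epsilon> d) \<le> C * \<epsilon> powr (-p)))"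

end

theory Submission
  imports Defs
begin

lemma lam_le1:
  assumes "eigen_seq lam" "1 \<le> m" shows "lam m \<le> lam 1"
  using assms(2)
proof (induction m rule: dec_induct)
  case base then show ?case by simp
next
  case (step n)
  have "lam (Suc n) \<le> lam n" using assms(1) step(1) unfolding eigen_seq_def by simp
  then show ?case using step.IH by linarith
qed

lemma lam_nonneg: "eigen_seq lam \<Longrightarrow> 1 \<le> m \<Longrightarrow> 0 \<le> lam m"
  unfolding eigen_seq_def by auto

lemma finite_count:
  assumes E: "eigen_seq lam" and L1: "lam 1 \<ge> 1" and e: "\<epsilon> > 0"
  shows "finite {k \<in> nabla_sym I d. lam_d lam d k > \<epsilon>\<^sup>2}"
proof -
  define \<eta> where "\<eta> = \<epsilon>\<^sup>2 / lam 1 ^ d"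
  have "\<eta> > 0" using e L1 unfolding \<eta>_def by simp
  have "lam \<longlonglongrightarrow> 0" using E unfolding eigen_seq_def by simp
  from order_tendstoD(2)[OF this \<open>\<eta> > 0\<close>] obtain N where N: "\<And>n. n \<ge> N \<Longrightarrow> lam n < \<eta>"
    unfolding eventually_sequentially by blast
  have "{k \<in> nabla_sym I d. lam_d lam d k > \<epsilon>\<^sup>2} \<subseteq> PiE {1..d} (\<lambda>_. {..<N})"
  proof
    fix k assume k: "k \<in> {k \<in> nabla_sym I d. lam_d lam d k > \<epsilon>\<^sup>2}"
    then have kP: "k \<in> {1..d} \<rightarrow>\<^sub>E {1..}" and big: "lam_d lam d k > \<epsilon>\<^sup>2"
      unfolding nabla_sym_def by auto
    have "k l < N" if l: "l \<in> {1..d}" for l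
    proof (rule ccontr)
      assume "\<not> k l < N"
      then have small: "lam (k l) < \<eta>" using N by simp
      have k1: "\<And>l. l \<in> {1..d} \<Longrightarrow> 1 \<le> k l" using kP by auto
      have "lam_d lam d k = lam (k l) * (\<Prod>j\<in>{1..d} - {l}. lam (k j))"
        unfolding lam_d_def using l by (simp add: prod.remove)
      also have "(\<Prod>j\<in>{1..d} - {l}. lam (k j)) \<le> (\<Prod>j\<in>{1..d} - {l}. lam 1)"
      proof (rule prod_mono)
        fix j assume "j \<in> {1..d} - {l}"
        then have "1 \<le> k j" using k1 by blast
        then show "0 \<le> lam (k j) \<and> lam (k j) \<le> lam 1"
          using lam_nonneg[OF E] lam_le1[OF E] by blast
      qed
      also have "\<dots> \<le> lam 1 ^ d"
      proof -
        have "(\<Prod>j\<in>{1..d} - {l}. lam 1) = lam 1 ^ (d - 1)" using l by simp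
        also have "\<dots> \<le> lam 1 ^ d" using L1 by (intro power_increasing) auto
        finally show ?thesis .
      qed
      finally have "lam_d lam d k \<le> lam (k l) * lam 1 ^ d"
        using lam_nonneg[OF E k1[OF l]] by (simp add: mult_left_mono)
      also have "\<dots> < \<eta> * lam 1 ^ d" using small L1 by simp
      also have "\<dots> = \<epsilon>\<^sup>2" unfolding \<eta>_def using L1 by simp
      finally show False using big by simp
    qed
    then show "k \<in> PiE {1..d} (\<lambda>_. {..<N})" using kP by (auto simp: PiE_iff)
  qed
  moreover have "finite (PiE {1..d} (\<lambda>_. {..<N}))" by (intro finite_PiE) auto
  ultimately show ?thesis by (rule finite_subset)
qed

definition kf :: "nat \<Rightarrow> nat set \<Rightarrow> nat \<Rightarrow> nat" where
  "kf d T = restrict (\<lambda>i. if i \<in> T then 2 else 1) {1..d}"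

lemma kf_lam:
  assumes "T \<subseteq> {1..d}"
  shows "lam_d lam d (kf d T) = lam 2 ^ card T * lam 1 ^ (d - card T)"
proof -
  have "lam_d lam d (kf d T) = (\<Prod>l\<in>{1..d}. if l \<in> T then lam 2 else lam 1)"
    unfolding lam_d_def kf_def by (intro prod.cong) auto
  also have "\<dots> = (\<Prod>l\<in>{1..d} \<inter> {x. x \<in> T}. lam 2) * (\<Prod>l\<in>{1..d} \<inter> - {x. x \<in> T}. lam 1)"
    by (rule prod.If_cases) simp
  also have "{1..d} \<inter> {x. x \<in> T} = T" using assms by auto
  also have "{1..d} \<inter> - {x. x \<in> T} = {1..d} - T" by auto
  finally have *: "lam_d lam d (kf d T) = (\<Prod>l\<in>T. lam 2) * (\<Prod>l\<in>{1..d} - T. lam 1)" .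
  have "card ({1..d} - T) = d - card T"
    using assms by (simp add: card_Diff_subset finite_subset)
  with * show ?thesis by simp
qed

lemma kf_app: "x \<in> {1..d} \<Longrightarrow> kf d T x = (if x \<in> T then 2 else 1)"
  unfolding kf_def by simp

lemma kf_nabla:
  assumes "T \<subseteq> {1..d}" "\<And>i j. i \<in> I d \<Longrightarrow> j \<in> I d \<Longrightarrow> i \<le> j \<Longrightarrow> i \<in> T \<Longrightarrow> j \<in> T"
    and "I d \<subseteq> {1..d}"
  shows "kf d T \<in> nabla_sym I d"
  unfolding nabla_sym_def
proof (intro CollectI conjI ballI impI)
  show "kf d T \<in> {1..d} \<rightarrow>\<^sub>E {1..}" unfolding kf_def by (simp add: PiE_iff)
  fix i j assume i: "i \<in> I d" and j: "j \<in> I d" and ij: "i \<le> j"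
  have iD: "i \<in> {1..d}" and jD: "j \<in> {1..d}" using assms(3) i j by auto
  show "kf d T i \<le> kf d T j"
  proof (cases "i \<in> T")
    case True
    then have "j \<in> T" using assms(2) i j ij by blast
    then show ?thesis using True kf_app[OF iD] kf_app[OF jD] by simp
  next
    case False
    then show ?thesis using kf_app[OF iD] kf_app[OF jD] by simp
  qed
qed

lemma kf_inj: "inj_on (kf d) (Pow {1..d})"
proof (rule inj_onI)
  fix A B assume A: "A \<in> Pow {1..d}" and B: "B \<in> Pow {1..d}" and eq: "kf d A = kf d B"
  have "x \<in> A \<longleftrightarrow> x \<in> B" if "x \<in> {1..d}" for x
  proof -
    have "(if x \<in> A then 2 else 1) = (if x \<in> B then (2::nat) else 1)"
      using fun_cong[OF eq, of x] kf_app[OF that] by metis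
    then show ?thesis by (cases "x \<in> A"; cases "x \<in> B") auto
  qed
  then show "A = B" using A B by blast
qed


lemma card_B:
  assumes "index_family I" "d \<ge> 1"
  shows "card ({1..d} - I d) = bdim I d" and "I d \<subseteq> {1..d}"
proof -
  show sub: "I d \<subseteq> {1..d}" using assms unfolding index_family_def by auto
  then show "card ({1..d} - I d) = bdim I d"
    unfolding bdim_def by (simp add: card_Diff_subset finite_subset)
qed

lemma count_lower:
  assumes E: "eigen_seq lam" and L1: "lam 1 \<ge> 1" and L2: "lam 2 > 0"
    and IF: "index_family I" and d: "d \<ge> 1" and e: "\<epsilon> > 0"
    and em: "\<epsilon>\<^sup>2 < min 1 (lam 2) ^ m"
  shows "bdim I d choose m \<le> info_compl_sym lam I \<epsilon> d"
proof -
  define B where "B = {1..d} - I d"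
  have cB: "card B = bdim I d" and sub: "I d \<subseteq> {1..d}" using card_B[OF IF d] B_def by auto
  have fB: "finite B" unfolding B_def by simp
  define S where "S = {J. J \<subseteq> B \<and> card J = m}"
  have cS: "card S = bdim I d choose m" unfolding S_def using n_subsets[OF fB, of m] cB by simp
  define X where "X = {k \<in> nabla_sym I d. lam_d lam d k > \<epsilon>\<^sup>2}"
  have fX: "finite X" unfolding X_def by (rule finite_count[OF E L1 e])
  have "inj_on (kf d) S"
    by (rule inj_on_subset[OF kf_inj]) (auto simp: S_def B_def)
  moreover have "kf d ` S \<subseteq> X"
  proof
    fix k assume "k \<in> kf d ` S"
    then obtain J where J: "J \<in> S" and k: "k = kf d J" by blast
    have JB: "J \<subseteq> {1..d}" "card J = m" and JI: "\<And>i. i \<in> I d \<Longrightarrow> i \<notin> J"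
      using J unfolding S_def B_def by auto
    have "k \<in> nabla_sym I d" unfolding k
      by (rule kf_nabla[of J d I]) (use JB(1) JI sub in auto)
    moreover have "lam_d lam d k > \<epsilon>\<^sup>2"
    proof -
      have "\<epsilon>\<^sup>2 < min 1 (lam 2) ^ m" by (rule em)
      also have "\<dots> \<le> lam 2 ^ m" by (rule power_mono) (use L2 in auto)
      also have "\<dots> \<le> lam 2 ^ m * lam 1 ^ (d - m)"
        using L1 L2 by (simp add: one_le_power)
      also have "\<dots> = lam_d lam d k" unfolding k using kf_lam[OF JB(1)] JB(2) by simp
      finally show ?thesis .
    qed
    ultimately show "k \<in> X" unfolding X_def by blast
  qed
  ultimately have "card S \<le> card X" using fX by (rule card_inj_on_le)
  then show ?thesis using cS unfolding info_compl_sym_def X_def by simp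
qed

lemma a1: "(0::real) < \<delta> \<Longrightarrow> \<delta> ^ m = \<delta> powr real m" by (simp add: powr_realpow)
lemma a2: "((\<delta>::real) powr real m) powr (-p/2) = \<delta> powr (real m * (-p/2))" by (simp only: powr_powr)
lemma a3: "(\<delta>::real) powr (real m * (-p/2)) = (\<delta> powr (-p/2)) powr real m" by (simp only: powr_powr mult.commute)
lemma a4: "(0::real) < \<delta> \<Longrightarrow> (\<delta> powr (-p/2)) powr real m = (\<delta> powr (-p/2)) ^ m" by (simp add: powr_realpow)
lemma a5: "(2::real) powr (-p/2) = inverse (2 powr (p/2))" by (simp add: powr_minus)
lemma a6: "(0::real) \<le> x \<Longrightarrow> sqrt x powr (-p) = x powr (-p/2)"
proof -
  assume "0 \<le> x"
  then have "sqrt x = x powr (1/2)" by (simp add: powr_half_sqrt)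
  then have "sqrt x powr (-p) = (x powr (1/2)) powr (-p)" by simp
  also have "\<dots> = x powr (1/2 * (-p))" by (simp only: powr_powr)
  also have "1/2 * (-p) = -p/2" by simp
  finally show ?thesis .
qed
lemma powr_calc:
  fixes \<delta> p :: real
  assumes "0 < \<delta>"
  shows "sqrt (\<delta> ^ m / 2) powr (- p) = 2 powr (p/2) * (\<delta> powr (-p/2)) ^ m"
proof -
  have "sqrt (\<delta> ^ m / 2) powr (- p) = (\<delta> ^ m / 2) powr (-p/2)" using assms by (intro a6) simp
  also have "\<dots> = (\<delta> ^ m) powr (-p/2) / 2 powr (-p/2)"
    using assms by (simp add: powr_divide)
  also have "(\<delta> ^ m) powr (-p/2) = (\<delta> powr (-p/2)) ^ m"
    unfolding a1[OF assms, of m] a2[of \<delta> m p] a3[of \<delta> m p] a4[OF assms, of p m] ..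
  also have "2 powr (-p/2) = inverse (2 powr (p/2))" by (rule a5)
  finally show ?thesis by (simp only: divide_inverse inverse_inverse_eq mult.commute)
qed



lemma binom_bound:
  assumes E: "eigen_seq lam" and L1: "lam 1 \<ge> 1" and L2: "lam 2 > 0"
    and IF: "index_family I" and d: "d \<ge> 1"
    and H: "\<And>\<epsilon>. 0 < \<epsilon> \<Longrightarrow> \<epsilon> \<le> 1 \<Longrightarrow> real (info_compl_sym lam I \<epsilon> d) \<le> C * \<epsilon> powr (-p) * F"
  shows "real (bdim I d choose m) \<le> C * 2 powr (p/2) * (min 1 (lam 2) powr (-p/2)) ^ m * F"
proof -
  define \<delta> where "\<delta> = min 1 (lam 2)"
  have dp: "0 < \<delta>" "\<delta> \<le> 1" unfolding \<delta>_def using L2 by auto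
  have dm: "0 < \<delta> ^ m" "\<delta> ^ m \<le> 1" using dp by (auto simp: power_le_one)
  define \<epsilon> where "\<epsilon> = sqrt (\<delta> ^ m / 2)"
  have ep: "0 < \<epsilon>" unfolding \<epsilon>_def using dm by simp
  have e1: "\<epsilon> \<le> 1" unfolding \<epsilon>_def using dm by simp
  have e2: "\<epsilon>\<^sup>2 = \<delta> ^ m / 2" unfolding \<epsilon>_def using dm by simp
  have "\<epsilon>\<^sup>2 < min 1 (lam 2) ^ m" using e2 dm unfolding \<delta>_def by simp
  from count_lower[OF E L1 L2 IF d ep this]
  have "real (bdim I d choose m) \<le> real (info_compl_sym lam I \<epsilon> d)" by simp
  also have "\<dots> \<le> C * \<epsilon> powr (-p) * F" by (rule H[OF ep e1])
  also have "\<epsilon> powr (-p) = 2 powr (p/2) * (\<delta> powr (-p/2)) ^ m"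
    unfolding \<epsilon>_def by (rule powr_calc[OF dp(1)])
  finally show ?thesis unfolding \<delta>_def by (simp only: mult.assoc)
qed


lemma ln_ge1: "(3::nat) \<le> d \<Longrightarrow> 1 \<le> ln (real d)"
proof -
  assume "3 \<le> d"
  then have "exp 1 \<le> real d" using exp_le by linarith
  then have "ln (exp 1) \<le> ln (real d)" using \<open>3 \<le> d\<close> by (subst ln_le_cancel_iff) auto
  then show ?thesis by simp
qed

lemma part1:
  assumes E: "eigen_seq lam" and L1: "lam 1 \<ge> 1" and L2: "lam 2 > 0"
    and IF: "index_family I" and PT: "poly_tractable (info_compl_sym lam I)"
  shows "(\<lambda>d. real (bdim I d)) \<in> O(\<lambda>d. ln (real d))"
proof -
  obtain C p q where Cp: "C > 0" "p > 0" "q \<ge> 0" and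
    H: "\<And>d \<epsilon>. d \<ge> 1 \<Longrightarrow> 0 < \<epsilon> \<Longrightarrow> \<epsilon> \<le> 1 \<Longrightarrow> real (info_compl_sym lam I \<epsilon> d) \<le> C * \<epsilon> powr (-p) * real d powr q"
    using PT unfolding poly_tractable_def by blast
  define A where "A = min 1 (lam 2) powr (-p/2)"
  define K where "K = max 1 (C * 2 powr (p/2))"
  have A0: "A > 0" unfolding A_def using L2 by simp
  have K1: "K \<ge> 1" "C * 2 powr (p/2) \<le> K" unfolding K_def by auto
  have B: "real (bdim I d choose m) \<le> K * A ^ m * real d powr q" if d: "d \<ge> 1" for d m
  proof -
    have "real (bdim I d choose m) \<le> C * 2 powr (p/2) * A ^ m * real d powr q"
      unfolding A_def by (rule binom_bound[OF E L1 L2 IF d H[OF d]])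
    also have "\<dots> \<le> K * A ^ m * real d powr q"
      using K1 A0 by (intro mult_right_mono) auto
    finally show ?thesis .
  qed
  define c where "c = 2 * K * A * exp q + 2"
  have "eventually (\<lambda>d. norm (real (bdim I d)) \<le> c * norm (ln (real d))) at_top"
    using eventually_ge_at_top[of "3::nat"]
  proof eventually_elim
    case (elim d)
    define L where "L = ln (real d)"
    have L: "1 \<le> L" unfolding L_def using ln_ge1[OF elim] .
    define m where "m = nat \<lceil>L\<rceil>"
    have m: "L \<le> real m" "real m \<le> L + 1" "1 \<le> m" unfolding m_def using L by linarith+
    have d1: "d \<ge> 1" using elim by simp
    define b where "b = bdim I d"
    have c0: "K * A * exp q \<ge> 0" using K1 A0 by simp
    have c00: "2 * K * A * exp q \<ge> 0" using K1 A0 by (intro mult_nonneg_nonneg) auto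
    have c2: "2 \<le> c" unfolding c_def using c00 by linarith
    have cL: "c * L = K * A * exp q * (2 * L) + 2 * L" unfolding c_def by (simp add: algebra_simps)
    have "real b \<le> c * L"
    proof (cases "m \<le> b")
      case False
      then have "real b \<le> real m" by simp
      also have "\<dots> \<le> 2 * L" using m L by simp
      also have "\<dots> \<le> c * L" using c2 L by (intro mult_right_mono) auto
      finally show ?thesis .
    next
      case True
      have mono: "\<And>x y. x \<le> y \<Longrightarrow> K * A ^ m * x \<le> K * A ^ m * y"
        using K1 A0 by (intro mult_left_mono) auto
      have "(real b / real m) ^ m \<le> real (b choose m)"
        using binomial_ge_n_over_k_pow_k[OF True] by simp
      also have "\<dots> \<le> K * A ^ m * real d powr q" unfolding b_def by (rule B[OF d1])
      also have "real d powr q = exp (q * L)" unfolding L_def powr_def using d1 by simp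
      also have "\<dots> \<le> exp (real m * q)" using mult_left_mono[OF m(1) Cp(3)] by (simp add: mult.commute)
      also have "\<dots> = exp q ^ m" by (rule exp_of_nat_mult)
      also have "K \<le> K ^ m" using K1 m by (metis power_increasing power_one_right)
      then have "K * A ^ m * exp q ^ m \<le> K ^ m * A ^ m * exp q ^ m"
        using A0 by (intro mult_right_mono) auto
      also have "\<dots> = (K * A * exp q) ^ m" by (simp add: power_mult_distrib)
      finally have **: "(real b / real m) ^ m \<le> (K * A * exp q) ^ m"
        using mono by blast
      have sm: "Suc (m - 1) = m" using m by simp
      have *: "(real b / real m) ^ Suc (m - 1) \<le> (K * A * exp q) ^ Suc (m - 1)"
        unfolding sm by (rule **)
      have "real b / real m \<le> K * A * exp q" by (rule power_le_imp_le_base[OF * c0])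
      then have "real b \<le> K * A * exp q * real m" using m by (simp add: divide_le_eq)
      also have "\<dots> \<le> K * A * exp q * (2 * L)" using m L c0 by (intro mult_left_mono) auto
      also have "\<dots> \<le> c * L" using cL L by linarith
      finally show ?thesis .
    qed
    then show ?case unfolding b_def L_def using L L_def by simp
  qed
  then show ?thesis by (rule bigoI)
qed


lemma part2:
  assumes E: "eigen_seq lam" and L1: "lam 1 \<ge> 1" and L2: "lam 2 > 0"
    and IF: "index_family I" and SPT: "strongly_poly_tractable (info_compl_sym lam I)"
  shows "(\<lambda>d. real (bdim I d)) \<in> O(\<lambda>_. 1) \<and> lam 2 < 1 / lam 1"
proof -
  obtain C p where Cp: "C > 0" "p > 0" and
    H: "\<And>d \<epsilon>. d \<ge> 1 \<Longrightarrow> 0 < \<epsilon> \<Longrightarrow> \<epsilon> \<le> 1 \<Longrightarrow> real (info_compl_sym lam I \<epsilon> d) \<le> C * \<epsilon> powr (-p)"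
    using SPT unfolding strongly_poly_tractable_def by blast
  define Bc where "Bc = C * 2 powr (p/2) * (min 1 (lam 2) powr (-p/2)) ^ 1 * 1"
  have Hb: "real (bdim I d) \<le> Bc" if d: "d \<ge> 1" for d
  proof -
    have H': "\<And>\<epsilon>. 0 < \<epsilon> \<Longrightarrow> \<epsilon> \<le> 1 \<Longrightarrow> real (info_compl_sym lam I \<epsilon> d) \<le> C * \<epsilon> powr (-p) * 1"
      using H[OF d] by simp
    have "real (bdim I d choose 1) \<le> Bc"
      unfolding Bc_def by (rule binom_bound[OF E L1 L2 IF d H'])
    then show ?thesis by simp
  qed
  have O1: "(\<lambda>d. real (bdim I d)) \<in> O(\<lambda>_. 1)"
  proof (rule bigoI)
    show "eventually (\<lambda>d. norm (real (bdim I d)) \<le> Bc * norm (1::real)) at_top"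
      using eventually_ge_at_top[of "1::nat"] by eventually_elim (use Hb in simp)
  qed
  have "lam 2 < 1 / lam 1"
  proof (rule ccontr)
    assume "\<not> lam 2 < 1 / lam 1"
    then have "1 / lam 1 \<le> lam 2" by simp
    then have LL: "1 \<le> lam 2 * lam 1" using L1 by (simp add: divide_le_eq)
    define M where "M = C * (1/2) powr (-p)"
    define N where "N = nat \<lceil>M + Bc\<rceil>"
    define d where "d = 2 * N + 2"
    have d1: "d \<ge> 1" unfolding d_def by simp
    have sub: "I d \<subseteq> {1..d}" using card_B[OF IF d1] by simp
    define S where "S = {s \<in> I d. N + 2 \<le> s}"
    define T where "T s = {i \<in> I d. s \<le> i}" for s
    define X where "X = {k \<in> nabla_sym I d. lam_d lam d k > (1/2::real)\<^sup>2}"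
    have fX: "finite X" unfolding X_def by (rule finite_count[OF E L1]) simp
    have TP: "T s \<in> Pow {1..d}" for s using sub unfolding T_def by auto
    have "inj_on (\<lambda>s. kf d (T s)) S"
    proof (rule inj_onI)
      fix s s' assume s: "s \<in> S" and s': "s' \<in> S" and eq: "kf d (T s) = kf d (T s')"
      have "T s = T s'" using inj_onD[OF kf_inj eq TP TP] .
      then have "s \<in> T s'" "s' \<in> T s" using s s' unfolding T_def S_def by auto
      then show "s = s'" unfolding T_def by auto
    qed
    moreover have "(\<lambda>s. kf d (T s)) ` S \<subseteq> X"
    proof
      fix k assume "k \<in> (\<lambda>s. kf d (T s)) ` S"
      then obtain s where s: "s \<in> S" and k: "k = kf d (T s)" by blast
      have Td: "T s \<subseteq> {1..d}" using TP by auto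
      have "k \<in> nabla_sym I d" unfolding k
        by (rule kf_nabla[of "T s" d I]) (use Td sub in \<open>auto simp: T_def\<close>)
      moreover have "lam_d lam d k > (1/2::real)\<^sup>2"
      proof -
        define t where "t = card (T s)"
        have "T s \<subseteq> {s..d}" using Td unfolding T_def by auto
        then have "t \<le> card {s..d}" unfolding t_def by (intro card_mono) auto
        also have "card {s..d} = d + 1 - s" by simp
        finally have tle: "t \<le> N + 1" using s unfolding S_def d_def by (simp; arith)
        then have tt: "t \<le> d - t" unfolding d_def by simp
        have "(1/2::real)\<^sup>2 < 1" by (simp add: power2_eq_square)
        also have "1 \<le> (lam 2 * lam 1) ^ t" using LL by (rule one_le_power)
        also have "\<dots> = lam 2 ^ t * lam 1 ^ t" by (rule power_mult_distrib)
        also have "\<dots> \<le> lam 2 ^ t * lam 1 ^ (d - t)"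
          using L1 L2 tt by (intro mult_left_mono power_increasing) auto
        also have "\<dots> = lam_d lam d k" unfolding k t_def using kf_lam[OF Td] by simp
        finally show ?thesis .
      qed
      ultimately show "k \<in> X" unfolding X_def by blast
    qed
    ultimately have "card S \<le> card X" using fX by (rule card_inj_on_le)
    then have cSX: "real (card S) \<le> M"
      using H[OF d1, of "1/2"] unfolding M_def X_def info_compl_sym_def by simp
    have "{N+2..d} \<subseteq> S \<union> ({1..d} - I d)" unfolding S_def by auto
    have fS: "finite S" by (rule finite_subset[of _ "{1..d}"]) (use sub in \<open>auto simp: S_def\<close>)
    then have "card {N+2..d} \<le> card (S \<union> ({1..d} - I d))"
      using \<open>{N+2..d} \<subseteq> S \<union> ({1..d} - I d)\<close> by (intro card_mono) auto
    also have "\<dots> \<le> card S + card ({1..d} - I d)" by (rule card_Un_le)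
    also have "card ({1..d} - I d) = bdim I d" using card_B[OF IF d1] by simp
    finally have "N + 1 \<le> card S + bdim I d" unfolding d_def by simp
    then have "real N + 1 \<le> real (card S) + real (bdim I d)" by linarith
    moreover have "M + Bc \<le> real N" unfolding N_def by linarith
    ultimately show False using cSX Hb[OF d1] by linarith
  qed
  with O1 show ?thesis by blast
qed

theorem proposition4:
  fixes lam :: "nat \<Rightarrow> real" and I :: "nat \<Rightarrow> nat set"
  assumes "eigen_seq lam" and "lam 2 > 0" and "index_family I"
    and "lam 1 \<ge> 1"
  shows "(poly_tractable (info_compl_sym lam I) \<longrightarrow>
            (\<lambda>d. real (bdim I d)) \<in> O(\<lambda>d. ln (real d)))
       \<and> (strongly_poly_tractable (info_compl_sym lam I) \<longrightarrow>
            (\<lambda>d. real (bdim I d)) \<in> O(\<lambda>_. 1) \<and> lam 2 < 1 / lam 1)"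
  using part1[OF assms(1,4,2,3)] part2[OF assms(1,4,2,3)] by blast

end
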